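(* In the general framework (continuous $f_{l,n}:\Omega\to\mathbb R^d$, $l=1,\ldots,R_n$, $Y_n(\omega)=\{f_{l,n}(\omega)\}_l$), let $\omega\in\Omega$ and suppose that for some $s>0$, $\liminf_{n\to\infty}T(Y_n(\omega),sR_n^{-1/d})/R_n=0$. Then there exists $h:\mathbb N\to[0,\infty)$ with $\sum_nh(n)=\infty$ such that $\{x\in\mathbb R^d:x\in\bigcup_{l=1}^{R_n}B(f_{l,n}(\omega),(h(n)/R_n)^{1/d})$ for infinitely many $n\}$ has zero Lebesgue measure.
   Context: $T(Y,r)$ = maximal cardinality of an $r$-separated subset (distinct points at distance $>r$) of a finite set $Y$; $B(x,r)$ closed ball. *)

theory Defs
  imports "HOL-Analysis.Analysis"
begin

definition sep_number :: "'a::metric_space set \<Rightarrow> real \<Rightarrow> nat" where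
  "sep_number Y r = Max {card S | S. S \<subseteq> Y \<and> (\<forall>x\<in>S. \<forall>y\<in>S. x \<noteq> y \<longrightarrow> dist x y > r)}"

end

theory Submission
  imports Defs
begin

lemma sep_cover:
  fixes Y :: "'a::metric_space set" assumes fin: "finite Y" and r: "r \<ge> 0"
  shows "\<exists>S\<subseteq>Y. card S = sep_number Y r \<and> (\<forall>y\<in>Y. \<exists>x\<in>S. dist y x \<le> r)"
proof -
  let ?C = "{card S | S. S \<subseteq> Y \<and> (\<forall>x\<in>S. \<forall>y\<in>S. x \<noteq> y \<longrightarrow> dist x y > r)}"
  have finC: "finite ?C"
  proof -
    have "?C \<subseteq> card ` Pow Y" by auto
    thus ?thesis using fin by (meson finite_Pow_iff finite_imageI finite_subset)
  qed
  have neC: "?C \<noteq> {}" by auto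
  have "sep_number Y r \<in> ?C" unfolding sep_number_def using Max_in[OF finC neC] .
  then obtain S where S: "S \<subseteq> Y" "\<forall>x\<in>S. \<forall>y\<in>S. x \<noteq> y \<longrightarrow> dist x y > r" "card S = sep_number Y r"
    by auto
  have "\<forall>y\<in>Y. \<exists>x\<in>S. dist y x \<le> r"
  proof (rule ccontr)
    assume "\<not> ?thesis"
    then obtain y where y: "y \<in> Y" "\<forall>x\<in>S. dist y x > r" by (auto simp: not_le)
    have yS: "y \<notin> S" using y r by fastforce
    have "card (insert y S) \<in> ?C"
      using S y by (auto simp: dist_commute)
    hence "card (insert y S) \<le> sep_number Y r" unfolding sep_number_def using finC by simp
    moreover have "finite S" using S fin finite_subset by blast
    ultimately show False using yS S by simp
  qed
  thus ?thesis using S by blast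
qed

lemma union_cball_measure:
  fixes S :: "'a::euclidean_space set" assumes "finite S" "\<rho> \<ge> 0"
  shows "measure lebesgue (\<Union>x\<in>S. cball x \<rho>) \<le> real (card S) * (unit_ball_vol (DIM('a)) * \<rho> ^ DIM('a))"
proof -
  have "measure lebesgue (\<Union>x\<in>S. cball x \<rho>) \<le> (\<Sum>x\<in>S. measure lebesgue (cball x \<rho>))"
    by (rule measure_UNION_le) (use assms in auto)
  also have "\<dots> = (\<Sum>x\<in>S. unit_ball_vol (DIM('a)) * \<rho> ^ DIM('a))"
    by (intro sum.cong refl) (simp add: content_cball assms)
  finally show ?thesis by simp
qed

lemma radius_eq:
  fixes s R d :: real
  assumes "s > 0" "R > 0" "d > 0"
  shows "(s powr d / R) powr (1 / d) = s * R powr (-1 / d)"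
proof -
  have "(s powr d / R) powr (1 / d) = (s powr d) powr (1/d) / R powr (1/d)"
    by (rule powr_divide)
  also have "(s powr d) powr (1/d) = s" using assms by (simp add: powr_powr)
  also have "R powr (-1/d) = 1 / R powr (1/d)"
    using powr_minus_divide[of R "1/d"] by simp
  ultimately show ?thesis by simp
qed

lemma pow_eq:
  fixes s R :: real
  assumes "s > 0" "R > 0" "d > 0"
  shows "(2 * (s * R powr (-1 / real d))) ^ d = 2 ^ d * s ^ d / R"
proof -
  have "(R powr (1/real d))^d = (R powr (1/real d)) powr real d"
    using assms by (simp add: powr_realpow)
  also have "\<dots> = R" using assms by (simp add: powr_powr)
  finally have e: "(R powr (1/real d))^d = R" .
  have "R powr (-1/real d) = 1 / R powr (1/real d)"
    using powr_minus_divide[of R "1/real d"] by simp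
  thus ?thesis by (simp add: power_mult_distrib power_divide e)
qed


fun sel :: "(nat \<Rightarrow> nat \<Rightarrow> bool) \<Rightarrow> nat \<Rightarrow> nat" where
  "sel P 0 = (SOME m. P 0 m)"
| "sel P (Suc k) = (SOME m. m > sel P k \<and> P (Suc k) m)"

lemma sel_props:
  assumes "\<forall>k. \<exists>\<^sub>\<infinity>m. P k m"
  shows "\<forall>k. P k (sel P k)" "strict_mono (sel P)"
proof -
  have ex: "\<exists>m>n. P k m" for n k using assms by (simp add: INFM_nat)
  have 0: "P 0 (sel P 0)" using ex[of 0 0] by (auto intro: someI_ex)
  have S: "sel P k < sel P (Suc k) \<and> P (Suc k) (sel P (Suc k))" for k
    using someI_ex[OF ex[of "sel P k" "Suc k"]] by simp
  show "\<forall>k. P k (sel P k)" proof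
    fix k show "P k (sel P k)" using 0 S by (cases k) auto
  qed
  show "strict_mono (sel P)" using S by (simp add: strict_mono_Suc_iff)
qed

theorem mainTheorem14:
  fixes f :: "nat \<Rightarrow> nat \<Rightarrow> 'b::topological_space \<Rightarrow> 'a::euclidean_space"
    and R :: "nat \<Rightarrow> nat"
    and \<omega> :: 'b and s :: real
  defines "d \<equiv> DIM('a)"
  assumes R_pos: "\<And>n. R n \<ge> 1"
    and f_cont: "\<And>n l. l \<in> {1..R n} \<Longrightarrow> continuous_on UNIV (f l n)"
    and s_pos: "s > 0"
    and liminf0: "liminf (\<lambda>n. ereal (real (sep_number ((\<lambda>l. f l n \<omega>) ` {1..R n})
                     (s * real (R n) powr (-1 / real d))) / real (R n))) = 0"
  shows "\<exists>h :: nat \<Rightarrow> real. (\<forall>n. h n \<ge> 0) \<and> \<not> summable h \<and>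
           {x. \<exists>\<^sub>\<infinity>n. x \<in> (\<Union>l\<in>{1..R n}. cball (f l n \<omega>) ((h n / real (R n)) powr (1 / real d)))}
             \<in> null_sets lebesgue"
proof -
  define Y where "Y n = (\<lambda>l. f l n \<omega>) ` {1..R n}" for n
  define r where "r n = s * real (R n) powr (-1 / real d)" for n
  define q where "q n = real (sep_number (Y n) (r n)) / real (R n)" for n
  have dpos: "d > 0" unfolding d_def by simp
  have Rpos: "real (R n) > 0" for n using R_pos[of n] by simp
  have rpos: "r n > 0" for n unfolding r_def using s_pos Rpos by simp
  have finY: "finite (Y n)" for n unfolding Y_def by simp
  have lim: "liminf (\<lambda>n. ereal (q n)) = 0" using liminf0 unfolding q_def Y_def r_def .
  have freq: "\<forall>k. \<exists>\<^sub>\<infinity>n. q n < (1/2::real)^k"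
  proof
    fix k :: nat
    have "\<not> ereal ((1/2)^k) \<le> liminf (\<lambda>n. ereal (q n))" using lim by (simp add: not_le)
    then obtain y where y: "y < ereal ((1/2)^k)" "\<not> eventually (\<lambda>n. y < ereal (q n)) sequentially"
      unfolding le_Liminf_iff by auto
    have "\<exists>\<^sub>F n in sequentially. ereal (q n) \<le> y" using y(2)
      by (simp add: not_eventually not_less)
    hence "\<exists>\<^sub>F n in sequentially. q n < (1/2)^k"
    proof (rule frequently_elim1)
      fix i assume "ereal (q i) \<le> y"
      hence "ereal (q i) < ereal ((1/2)^k)" using y(1) by (rule le_less_trans)
      thus "q i < (1/2)^k" by simp
    qed
    thus "\<exists>\<^sub>\<infinity>n. q n < (1/2::real)^k"
      by (simp add: frequently_cofinite cofinite_eq_sequentially)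
  qed
  define \<sigma> where "\<sigma> = sel (\<lambda>k n. q n < (1/2::real)^k)"
  have \<sigma>q: "\<And>k. q (\<sigma> k) < (1/2)^k" and \<sigma>mono: "strict_mono \<sigma>"
    using sel_props[OF freq] unfolding \<sigma>_def by auto
  define c where "c = s powr real d"
  have cpos: "c > 0" unfolding c_def using s_pos by simp
  define h where "h n = (if n \<in> range \<sigma> then c else 0)" for n
  define E where "E n = (\<Union>l\<in>{1..R n}. cball (f l n \<omega>) ((h n / real (R n)) powr (1 / real d)))" for n
  have hnn: "\<forall>n. h n \<ge> 0" unfolding h_def using cpos by auto
  have nsum: "\<not> summable h"
  proof
    assume "summable h"
    hence "h \<longlonglongrightarrow> 0" by (rule summable_LIMSEQ_zero)
    hence "(h \<circ> \<sigma>) \<longlonglongrightarrow> 0" using \<sigma>mono by (rule LIMSEQ_subseq_LIMSEQ)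
    moreover have "(h \<circ> \<sigma>) = (\<lambda>_. c)" unfolding h_def by auto
    ultimately show False using cpos LIMSEQ_unique by fastforce
  qed
  have Eoff: "E n = Y n" if "n \<notin> range \<sigma>" for n
    using that unfolding E_def h_def Y_def by auto
  have Eon: "E (\<sigma> k) = (\<Union>l\<in>{1..R (\<sigma> k)}. cball (f l (\<sigma> k) \<omega>) (r (\<sigma> k)))" for k
  proof -
    have "(h (\<sigma> k) / real (R (\<sigma> k))) powr (1 / real d) = r (\<sigma> k)"
      unfolding h_def c_def r_def using radius_eq[OF s_pos Rpos, of "real d"] dpos by simp
    thus ?thesis unfolding E_def by simp
  qed
  define K where "K = unit_ball_vol (real d) * (2 ^ d * s ^ d)"
  have Kpos: "K \<ge> 0" unfolding K_def using s_pos by simp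
  have Ecomp: "compact (E n)" for n unfolding E_def by (intro compact_UN) auto
  have Emeas: "measure lebesgue (E (\<sigma> k)) \<le> K * (1/2)^k" for k
  proof -
    let ?n = "\<sigma> k"
    obtain S where S: "S \<subseteq> Y ?n" "card S = sep_number (Y ?n) (r ?n)" "\<forall>y\<in>Y ?n. \<exists>x\<in>S. dist y x \<le> r ?n"
      using sep_cover[OF finY, of "r ?n" ?n] rpos[of ?n] by auto
    have finS: "finite S" using S(1) finY finite_subset by blast
    have sub: "E ?n \<subseteq> (\<Union>x\<in>S. cball x (2 * r ?n))"
    proof
      fix z assume "z \<in> E ?n"
      then obtain l where l: "l \<in> {1..R ?n}" "dist (f l ?n \<omega>) z \<le> r ?n" unfolding Eon by auto
      have "f l ?n \<omega> \<in> Y ?n" using l(1) unfolding Y_def by auto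
      then obtain x where x: "x \<in> S" "dist (f l ?n \<omega>) x \<le> r ?n" using S(3) by blast
      have "dist x z \<le> 2 * r ?n" using l(2) x(2) dist_triangle[of x z "f l ?n \<omega>"]
        by (simp add: dist_commute)
      thus "z \<in> (\<Union>x\<in>S. cball x (2 * r ?n))" using x(1) by auto
    qed
    have "measure lebesgue (E ?n) \<le> measure lebesgue (\<Union>x\<in>S. cball x (2 * r ?n))"
      using sub Ecomp[of ?n] finS by (intro measure_mono_fmeasurable) (auto intro!: lmeasurable_compact compact_UN fmeasurableD)
    also have "\<dots> \<le> real (card S) * (unit_ball_vol (DIM('a)) * (2 * r ?n) ^ DIM('a))"
      using union_cball_measure[OF finS, of "2 * r ?n"] rpos[of ?n] by simp
    also have "(2 * r ?n) ^ DIM('a) = 2 ^ d * s ^ d / real (R ?n)"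
      unfolding r_def d_def using pow_eq[OF s_pos Rpos dpos[unfolded d_def]] by simp
    also have "real (card S) * (unit_ball_vol (DIM('a)) * (2 ^ d * s ^ d / real (R ?n))) = K * q ?n"
      unfolding K_def q_def S(2) d_def by simp
    also have "\<dots> \<le> K * (1/2)^k" using \<sigma>q[of k] Kpos by (intro mult_left_mono) auto
    finally show ?thesis .
  qed
  define A where "A k = E (\<sigma> k)" for k
  have Anull: "limsup A \<in> null_sets lebesgue"
  proof (rule borel_cantelli_limsup1)
    show "A k \<in> sets lebesgue" for k unfolding A_def using Ecomp lmeasurable_compact by blast
    show "emeasure lebesgue (A k) < \<infinity>" for k unfolding A_def
      using Ecomp[of "\<sigma> k"] lmeasurable_compact unfolding fmeasurable_def by blast
    show "summable (\<lambda>k. measure lebesgue (A k))"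
      by (rule summable_comparison_test'[where g="\<lambda>k. K * (1/2)^k"])
         (auto simp: A_def Emeas intro!: summable_mult summable_geometric)
  qed
  have Bnull: "(\<Union>n. Y n) \<in> null_sets lebesgue"
    using finY by (intro null_sets_UN) (auto intro: null_sets_completionI finite_imp_null_set_lborel)
  have incl: "{x. \<exists>\<^sub>\<infinity>n. x \<in> E n} \<subseteq> limsup A \<union> (\<Union>n. Y n)"
  proof
    fix x assume x: "x \<in> {x. \<exists>\<^sub>\<infinity>n. x \<in> E n}"
    show "x \<in> limsup A \<union> (\<Union>n. Y n)"
    proof (cases "\<exists>n. n \<notin> range \<sigma> \<and> x \<in> E n")
      case True thus ?thesis using Eoff by auto
    next
      case False
      have "\<exists>k>m. x \<in> A k" for m
      proof -
        obtain n where n: "n > \<sigma> m" "x \<in> E n" using x by (auto simp: INFM_nat)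
        then obtain k where k: "n = \<sigma> k" using False by auto
        have "k > m" using n(1) k \<sigma>mono by (simp add: strict_mono_less)
        thus ?thesis using n(2) k A_def by auto
      qed
      hence "\<exists>\<^sub>\<infinity>k. x \<in> A k" by (simp add: INFM_nat)
      hence "\<exists>\<^sub>F k in sequentially. x \<in> A k"
        by (simp add: cofinite_eq_sequentially)
      thus ?thesis by (simp add: mem_limsup_iff)
    qed
  qed
  have "{x. \<exists>\<^sub>\<infinity>n. x \<in> E n} \<in> null_sets lebesgue"
    using incl Anull Bnull by (intro null_sets_completion_subset[OF incl]) auto
  thus ?thesis using hnn nsum unfolding E_def by blast
qed

end
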